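(* Let $F\in\mathbb Z[T]$ with $F(0)\in\{-1,1\}$ and let $d\in\mathbb Z_{>0}$. Then there exists $M\in\mathcal D$ such that $F\equiv M\pmod{T^d}$ in $\mathbb Z[T]$.
   Context: $\Phi_n(T)\in\mathbb Z[T]$ denotes the $n$-th cyclotomic polynomial. A positive integer $n$ is of the special form if $n=pm$ where $p$ is prime and $m$ is a positive integer dividing $p-1$. $\mathcal D$ (the special root-of-unity polynomials) is the set of polynomials of the form $\pm\prod_{i}\Phi_{n_i}(T)$, a product of distinct cyclotomic polynomials in which every $n_i$ is of the special form. *)

theory Defs
  imports "HOL-Computational_Algebra.Computational_Algebra" "HOL-Analysis.Analysis"
begin

definition cyclotomic_complex :: "nat \<Rightarrow> complex poly" where
  "cyclotomic_complex n =
     (\<Prod>k\<in>{k\<in>{1..n}. coprime k n}. [:- cis (2 * pi * real k / real n), 1:])"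

definition cyclotomic :: "nat \<Rightarrow> int poly" where
  "cyclotomic n = (THE p. map_poly of_int p = cyclotomic_complex n)"

definition special_form :: "nat \<Rightarrow> bool" where
  "special_form n \<longleftrightarrow> (\<exists>p m. prime p \<and> m > 0 \<and> m dvd (p - 1) \<and> n = p * m)"

text \<open>The set D: +- a product of distinct cyclotomic polynomials with special-form indices.\<close>
definition special_root_of_unity_polys :: "int poly set" where
  "special_root_of_unity_polys =
     {s * (\<Prod>n\<in>S. cyclotomic n) | s S. s \<in> {1, -1} \<and> finite S \<and> (\<forall>n\<in>S. special_form n)}"

end

theory Submission
  imports Defs "HOL-Number_Theory.Cong"
begin


definition w :: "nat \<Rightarrow> nat \<Rightarrow> complex" where
  "w n j = cis (2 * pi * real j / real n)"

lemma w_exp: "w n j = exp(2 * of_real pi * \<i> * of_nat j / of_nat n)"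
  unfolding w_def cis_conv_exp by (simp add: field_simps)

lemma w_eq: "n \<ge> 1 \<Longrightarrow> w n j = w n k \<longleftrightarrow> j mod n = k mod n"
  unfolding w_exp by (rule complex_root_unity_eq)

lemma w_pow: "(w n j) ^ m = w n (j * m)"
proof -
  have "(w n j) ^ m = cis (real m * (2 * pi * real j / real n))"
    unfolding w_def by (rule Complex.DeMoivre)
  also have "\<dots> = w n (j * m)" unfolding w_def by (simp add: field_simps)
  finally show ?thesis .
qed

lemma xn1_deg:
  assumes "n \<ge> 1"
  shows "degree (monom (1::'a::comm_ring_1) n - 1) = n \<and> lead_coeff (monom (1::'a) n - 1) = 1"
proof -
  have e: "monom (1::'a) n - 1 = (-1) + monom 1 n" by simp
  have d: "degree (-1 :: 'a poly) < degree (monom (1::'a) n)"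
    using assms by (simp add: degree_monom_eq)
  show ?thesis unfolding e using degree_add_eq_right[OF d] lead_coeff_add_le[OF d]
    by (simp add: degree_monom_eq)
qed

lemma w_zero: "w n 0 = 1"
  by (simp add: w_def)

lemma w_root: "n \<ge> 1 \<Longrightarrow> (w n j) ^ n = 1"
  using w_eq[of n "j*n" 0] by (simp add: w_pow w_zero)

lemma w_cancel: "g > 0 \<Longrightarrow> w (g * k) (g * i) = w k i"
  unfolding w_def by (simp add: field_simps)

lemma norm_w: "norm (w n j) = 1"
  by (simp add: w_def)

lemma prod_roots_dvd:
  fixes p :: "complex poly"
  assumes "finite A" "\<forall>a\<in>A. poly p a = 0"
  shows "(\<Prod>a\<in>A. [:-a, 1:]) dvd p"
  using assms
proof (induction A rule: finite_induct)
  case empty thus ?case by simp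
next
  case (insert a A)
  then obtain q where q: "p = (\<Prod>a\<in>A. [:-a, 1:]) * q" by (auto elim: dvdE)
  have "poly (\<Prod>a\<in>A. [:-a, 1:]) a \<noteq> 0"
    using insert.hyps by (auto simp: poly_prod)
  moreover have "poly p a = 0" using insert.prems by auto
  ultimately have "poly q a = 0" using q by simp
  then obtain r where r: "q = [:-a,1:] * r" using poly_eq_0_iff_dvd by (metis dvdE)
  have "p = ([:-a,1:] * (\<Prod>a\<in>A. [:-a, 1:])) * r" unfolding q r by (simp only: ac_simps)
  then show ?case using insert.hyps by (simp add: dvd_triv_left)
qed

lemma xn1_prod:
  assumes "n \<ge> 1"
  shows "monom (1::complex) n - 1 = (\<Prod>j\<in>{1..n}. [:- w n j, 1:])"
proof -
  define p where "p = monom (1::complex) n - 1"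
  define A where "A = w n ` {1..n}"
  have inj: "inj_on (w n) {1..n}"
  proof
    fix a b assume "a \<in> {1..n}" "b \<in> {1..n}" "w n a = w n b"
    then have "a mod n = b mod n" using w_eq assms by blast
    with \<open>a \<in> {1..n}\<close> \<open>b \<in> {1..n}\<close> show "a = b"
      by (metis atLeastAtMost_iff le_neq_implies_less mod_less mod_self
          not_one_le_zero)
  qed
  have cardA: "card A = n" unfolding A_def using card_image[OF inj] by simp
  have deg: "degree p = n" unfolding p_def using xn1_deg[OF assms] by blast
  have p0: "p \<noteq> 0" using deg assms by auto
  have roots: "\<forall>a\<in>A. poly p a = 0"
    using assms by (auto simp: A_def p_def poly_monom w_root)
  obtain q where q: "p = (\<Prod>a\<in>A. [:-a, 1:]) * q"
    using prod_roots_dvd[OF _ roots] A_def by (auto elim: dvdE)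
  have dP: "degree (\<Prod>a\<in>A. [:-a, 1:]) = n"
    using cardA by (simp add: degree_prod_eq_sum_degree A_def)
  have lP: "lead_coeff (\<Prod>a\<in>A. [:-a, 1:]) = 1"
    by (simp add: lead_coeff_prod)
  have q0: "q \<noteq> 0" using q p0 by auto
  have "degree p = n + degree q" using q q0 dP
    by (metis degree_mult_eq mult_zero_left p0)
  hence "degree q = 0" using deg by simp
  then obtain c where c: "q = [:c:]" by (metis degree_eq_zeroE)
  have "lead_coeff p = 1" unfolding p_def using xn1_deg[OF assms] by blast
  moreover have "lead_coeff p = lead_coeff (\<Prod>a\<in>A. [:-a, 1:]) * lead_coeff q"
    using q lead_coeff_mult by metis
  ultimately have "c = 1" using c lP by simp
  hence "p = (\<Prod>a\<in>A. [:-a, 1:])" using q c by simp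
  thus ?thesis unfolding p_def A_def using prod.reindex[OF inj, of "\<lambda>a. [:-a,1:]"]
    by simp
qed


lemma gcd_aux:
  fixes i k n :: nat
  assumes "k dvd n" "n \<ge> 1" "coprime i k"
  shows "gcd (i * (n div k)) n = n div k"
proof -
  have n: "n = k * (n div k)" using assms by simp
  have "gcd (i * (n div k)) (k * (n div k)) = (n div k) * gcd i k"
    by (metis gcd_mult_distrib_nat mult.commute)
  thus ?thesis using assms(3) n by simp
qed

lemma div_div_aux:
  fixes g n :: nat
  assumes "g dvd n" "n > 0"
  shows "n div (n div g) = g"
proof -
  obtain m where m: "n = g * m" using assms(1) by (auto elim: dvdE)
  hence "m > 0" "g > 0" using assms(2) by auto
  thus ?thesis using m by simp
qed

lemma prod_partition:
  fixes f :: "complex \<Rightarrow> 'a::comm_monoid_mult"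
  assumes n: "n \<ge> 1"
  shows "(\<Prod>j\<in>{1..n}. f (w n j)) = (\<Prod>k\<in>{k. k dvd n}. \<Prod>i\<in>{i\<in>{1..k}. coprime i k}. f (w k i))"
proof -
  have fin: "finite {k. k dvd n}" using n by simp
  have "(\<Prod>k\<in>{k. k dvd n}. \<Prod>i\<in>{i\<in>{1..k}. coprime i k}. f (w k i)) =
        (\<Prod>z\<in>Sigma {k. k dvd n} (\<lambda>k. {i\<in>{1..k}. coprime i k}). f (w (fst z) (snd z)))"
    by (subst prod.Sigma) (use fin in \<open>auto simp: split_def\<close>)
  also have "\<dots> = (\<Prod>j\<in>{1..n}. f (w n j))"
  proof -
  have "(\<Prod>j\<in>{1..n}. f (w n j)) = (\<Prod>z\<in>Sigma {k. k dvd n} (\<lambda>k. {i\<in>{1..k}. coprime i k}). f (w (fst z) (snd z)))"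
  proof (rule prod.reindex_bij_witness[where i = "\<lambda>z. snd z * (n div fst z)"
        and j = "\<lambda>j. (n div gcd j n, j div gcd j n)"])
    fix a assume a: "a \<in> {1..n}"
    define g where "g = gcd a n"
    have g0: "g > 0" using n by (simp add: g_def)
    have gn: "g dvd n" "g dvd a" by (auto simp: g_def)
    have "n div (n div g) = g" using gn n by (intro div_div_aux) auto
    thus "snd (n div gcd a n, a div gcd a n) * (n div fst (n div gcd a n, a div gcd a n)) = a"
      using gn by (simp add: g_def[symmetric])
    show "(n div gcd a n, a div gcd a n) \<in> Sigma {k. k dvd n} (\<lambda>k. {i\<in>{1..k}. coprime i k})"
    proof -
      have "n div g dvd n" using gn by (metis dvd_div_mult_self dvd_triv_left)
      moreover have "a div g \<ge> 1" using a gn g0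
        by (metis One_nat_def Suc_leI atLeastAtMost_iff bot_nat_0.not_eq_extremum div_eq_0_iff
            dvd_div_eq_0_iff not_one_le_zero)
      moreover have "a div g \<le> n div g" using a by (simp add: div_le_mono)
      moreover have "coprime (a div g) (n div g)" unfolding g_def
        using a by (intro div_gcd_coprime) auto
      ultimately show ?thesis by (simp add: g_def)
    qed
    have "w n a = w (g * (n div g)) (g * (a div g))" using gn by simp
    also have "\<dots> = w (n div g) (a div g)" by (rule w_cancel[OF g0])
    finally show "f (w (fst (n div gcd a n, a div gcd a n)) (snd (n div gcd a n, a div gcd a n))) = f (w n a)"
      by (simp add: g_def)
  next
    fix b assume b: "b \<in> Sigma {k. k dvd n} (\<lambda>k. {i\<in>{1..k}. coprime i k})"
    obtain k i where bki: "b = (k, i)" by (cases b)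
    have k: "k dvd n" and i: "i \<in> {1..k}" "coprime i k" using b bki by auto
    have k0: "k > 0" using k n by (metis dvd_0_left_iff gr0I not_one_le_zero)
    have gg: "gcd (i * (n div k)) n = n div k" by (rule gcd_aux[OF k n i(2)])
    have m0: "n div k > 0" using k n k0 by (metis div_greater_zero_iff dvd_imp_le not_one_le_zero not_gr0)
    have "n div (n div k) = k" using k n by (intro div_div_aux) auto
    thus "(n div gcd (snd b * (n div fst b)) n, snd b * (n div fst b) div gcd (snd b * (n div fst b)) n) = b"
      using gg bki m0 by simp
    have "i * (n div k) \<ge> 1" using i m0 by (simp add: Suc_le_eq)
    moreover have "i * (n div k) \<le> k * (n div k)" using i by simp
    ultimately show "snd b * (n div fst b) \<in> {1..n}" using bki k by simp
  qed
  thus ?thesis by simp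
  qed
  finally show ?thesis ..
qed

lemma cyc_complex_prod:
  assumes "n \<ge> 1"
  shows "(\<Prod>k\<in>{k. k dvd n}. cyclotomic_complex k) = monom 1 n - 1"
proof -
  have "monom 1 n - 1 = (\<Prod>j\<in>{1..n}. [:- w n j, 1:])" by (rule xn1_prod[OF assms])
  also have "\<dots> = (\<Prod>k\<in>{k. k dvd n}. \<Prod>i\<in>{i\<in>{1..k}. coprime i k}. [:- w k i, 1:])"
    by (rule prod_partition[OF assms])
  also have "\<dots> = (\<Prod>k\<in>{k. k dvd n}. cyclotomic_complex k)"
    by (simp add: cyclotomic_complex_def w_def)
  finally show ?thesis ..
qed


abbreviation ci :: "int poly \<Rightarrow> complex poly" where
  "ci p \<equiv> map_poly of_int p"

lemma ci_coeff: "coeff (ci p) n = of_int (coeff p n)"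
  by (simp add: coeff_map_poly)

lemma ci_add: "ci (p + q) = ci p + ci q"
  by (rule poly_eqI) (simp add: ci_coeff)

lemma ci_diff: "ci (p - q) = ci p - ci q"
  by (rule poly_eqI) (simp add: ci_coeff)

lemma ci_mult: "ci (p * q) = ci p * ci q"
  by (rule poly_eqI) (simp add: ci_coeff coeff_mult)

lemma ci_1: "ci 1 = 1"
  by simp

lemma ci_const: "ci [:c:] = [:of_int c:]"
  by (rule poly_eqI) (simp add: ci_coeff coeff_pCons split: nat.split)

lemma ci_monom: "ci (monom c n) = monom (of_int c) n"
  by (simp add: map_poly_monom)

lemma ci_prod: "ci (\<Prod>i\<in>A. f i) = (\<Prod>i\<in>A. ci (f i))"
  by (induction A rule: infinite_finite_induct) (auto simp: ci_mult)

lemma ci_inj: "ci p = ci q \<Longrightarrow> p = q"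
  by (rule poly_eqI) (metis ci_coeff of_int_eq_iff)

lemma ci_degree: "degree (ci p) = degree p"
  by (simp add: degree_map_poly)

lemma ci_lead: "lead_coeff (ci p) = of_int (lead_coeff p)"
  by (simp add: ci_degree ci_coeff)

lemma ci_poly: "poly (ci p) (of_int x) = of_int (poly p x)"
  by (induction p) (auto simp: map_poly_pCons)

lemma monic_div:
  fixes a b :: "int poly"
  assumes "lead_coeff b = 1" "ci a = ci b * c"
  shows "\<exists>q. c = ci q"
proof -
  obtain q r where qr: "pseudo_divmod a b = (q, r)" by (cases "pseudo_divmod a b")
  have b0: "b \<noteq> 0" using assms(1) by auto
  have e: "a = b * q + r" using pseudo_divmod(1)[OF b0 qr] assms(1) by simp
  have r: "r = 0 \<or> degree r < degree b" using pseudo_divmod(2)[OF b0 qr] .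
  have "ci b * (c - ci q) = ci r"
    using assms(2) e by (simp add: ci_add ci_mult algebra_simps)
  show ?thesis
  proof (cases "c = ci q")
    case True thus ?thesis by blast
  next
    case False
    have cb: "ci b \<noteq> 0" using b0 by (metis ci_inj map_poly_0)
    have "degree (ci b * (c - ci q)) \<ge> degree (ci b)"
      using False cb by (simp add: degree_mult_eq)
    hence "degree (ci r) \<ge> degree b" using \<open>ci b * (c - ci q) = ci r\<close> by (simp add: ci_degree)
    moreover have "ci r \<noteq> 0" using \<open>ci b * (c - ci q) = ci r\<close> cb False by auto
    ultimately show ?thesis using r by (auto simp: ci_degree)
  qed
qed

lemma cyc_complex_monic: "lead_coeff (cyclotomic_complex n) = 1"
  unfolding cyclotomic_complex_def by (simp add: lead_coeff_prod)

lemma cyc_ci: "n \<ge> 1 \<Longrightarrow> ci (cyclotomic n) = cyclotomic_complex n"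
proof (induction n rule: less_induct)
  case (less n)
  define D where "D = {k. k dvd n} - {n}"
  have fD: "finite D" using less.prems by (simp add: D_def)
  have IH: "\<forall>k\<in>D. ci (cyclotomic k) = cyclotomic_complex k"
  proof
    fix k assume k: "k \<in> D"
    hence "k dvd n" "k \<noteq> n" by (auto simp: D_def)
    hence "k < n" "k \<ge> 1" using less.prems
      by (auto simp: dvd_imp_le le_neq_implies_less intro: Suc_leI dest: dvd_imp_le)
    thus "ci (cyclotomic k) = cyclotomic_complex k" using less.IH by blast
  qed
  define B where "B = (\<Prod>k\<in>D. cyclotomic k)"
  have ciB: "ci B = (\<Prod>k\<in>D. cyclotomic_complex k)"
    unfolding B_def ci_prod using IH by (auto intro: prod.cong)
  have "of_int (lead_coeff B) = (1::complex)"
    using ciB by (simp add: ci_lead[symmetric] lead_coeff_prod cyc_complex_monic)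
  hence lB: "lead_coeff B = 1" by (metis of_int_eq_1_iff)
  have split: "{k. k dvd n} = insert n D" by (auto simp: D_def)
  have "monom 1 n - 1 = (\<Prod>k\<in>{k. k dvd n}. cyclotomic_complex k)"
    by (rule cyc_complex_prod[OF less.prems, symmetric])
  also have "\<dots> = (\<Prod>k\<in>D. cyclotomic_complex k) * cyclotomic_complex n"
    unfolding split using fD by (subst prod.insert) (auto simp: D_def mult.commute)
  finally have "ci (monom 1 n - 1) = ci B * cyclotomic_complex n"
    by (simp add: ci_diff ci_monom ciB)
  then obtain q where q: "cyclotomic_complex n = ci q" using monic_div[OF lB] by blast
  have "ci (cyclotomic n) = cyclotomic_complex n"
    unfolding cyclotomic_def
  proof (rule theI2[of "\<lambda>p. ci p = cyclotomic_complex n"])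
    show "ci q = cyclotomic_complex n" using q by simp
  qed (use q ci_inj in auto)
  thus ?case .
qed


lemma cyc_prod:
  assumes "n \<ge> 1"
  shows "(\<Prod>k\<in>{k. k dvd n}. cyclotomic k) = monom 1 n - 1"
proof (rule ci_inj)
  have "ci (\<Prod>k\<in>{k. k dvd n}. cyclotomic k) = (\<Prod>k\<in>{k. k dvd n}. cyclotomic_complex k)"
    unfolding ci_prod
  proof (rule prod.cong)
    fix k assume "k \<in> {k. k dvd n}"
    hence "k \<ge> 1" using assms by (cases k) auto
    thus "ci (cyclotomic k) = cyclotomic_complex k" by (rule cyc_ci)
  qed simp
  also have "\<dots> = monom 1 n - 1" by (rule cyc_complex_prod[OF assms])
  finally show "ci (\<Prod>k\<in>{k. k dvd n}. cyclotomic k) = ci (monom 1 n - 1)"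
    by (simp add: ci_diff ci_monom)
qed

lemma cyc_lead: "n \<ge> 1 \<Longrightarrow> lead_coeff (cyclotomic n) = 1"
  by (metis ci_lead cyc_ci cyc_complex_monic of_int_eq_1_iff)

lemma cyc_nz: "n \<ge> 1 \<Longrightarrow> cyclotomic n \<noteq> 0"
  using cyc_lead by fastforce

lemma cyc_dvd: "n \<ge> 1 \<Longrightarrow> cyclotomic n dvd monom 1 n - 1"
proof -
  assume n: "n \<ge> 1"
  have "n \<in> {k. k dvd n}" by simp
  hence "cyclotomic n dvd (\<Prod>k\<in>{k. k dvd n}. cyclotomic k)"
    using n by (intro dvd_prodI) auto
  thus ?thesis using cyc_prod[OF n] by simp
qed

lemma poly_dvd_eval: "(p::'a::comm_ring_1 poly) dvd q \<Longrightarrow> poly p x dvd poly q x"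
  by (auto elim!: dvdE)

lemma cyc0: "n \<ge> 1 \<Longrightarrow> poly (cyclotomic n) 0 \<in> {1, -1}"
proof -
  assume n: "n \<ge> 1"
  have "poly (cyclotomic n) 0 dvd poly (monom 1 n - 1) 0"
    by (rule poly_dvd_eval[OF cyc_dvd[OF n]])
  moreover have "poly (monom (1::int) n - 1) 0 = -1" using n by (simp add: poly_monom)
  ultimately have "poly (cyclotomic n) 0 dvd 1" by simp
  hence "\<bar>poly (cyclotomic n) 0\<bar> = 1" by (simp only: zdvd1_eq)
  hence "poly (cyclotomic n) 0 = 1 \<or> poly (cyclotomic n) 0 = -1" by arith
  thus ?thesis by blast
qed

lemma pcomp_monom: "pcompose (monom 1 m) q = (q :: 'a::comm_ring_1 poly) ^ m"
proof (induction m)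
  case 0 thus ?case by (simp add: pcompose_1 one_pCons[symmetric] monom_0)
next
  case (Suc m)
  have "monom (1::'a) (Suc m) = monom 1 1 * monom 1 m"
    by (simp add: mult_monom)
  also have "monom (1::'a) 1 = [:0,1:]" by (simp add: monom_Suc monom_0)
  finally have "monom (1::'a) (Suc m) = [:0,1:] * monom 1 m" .
  thus ?case using Suc by (simp add: pcompose_mult pcompose_pCons)
qed

lemma monom_pow: "(monom (1::'a::comm_ring_1) p) ^ m = monom 1 (p * m)"
proof (induction m)
  case 0 show ?case by (simp add: monom_0 one_pCons)
next
  case (Suc m)
  have "monom (1::'a) p ^ Suc m = monom 1 p * monom 1 (p * m)" using Suc by (simp only: power_Suc)
  also have "\<dots> = monom 1 (p * Suc m)" by (simp only: mult_monom mult_1 mult_Suc_right)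
  finally show ?case .
qed


lemma divisors_pm:
  fixes p m :: nat
  assumes p: "prime p" and pm: "\<not> p dvd m"
  shows "{k. k dvd p * m} = {k. k dvd m} \<union> (\<lambda>k. p * k) ` {k. k dvd m}"
    and "{k. k dvd m} \<inter> (\<lambda>k. p * k) ` {k. k dvd m} = {}"
proof -
  show "{k. k dvd p * m} = {k. k dvd m} \<union> (\<lambda>k. p * k) ` {k. k dvd m}"
  proof (intro equalityI subsetI)
    fix k assume "k \<in> {k. k dvd p * m}"
    hence k: "k dvd p * m" by simp
    show "k \<in> {k. k dvd m} \<union> (\<lambda>k. p * k) ` {k. k dvd m}"
    proof (cases "p dvd k")
      case True
      then obtain k' where "k = p * k'" by (auto elim: dvdE)
      hence "k' dvd m" using k p by (auto simp: prime_gt_0_nat)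
      thus ?thesis using \<open>k = p * k'\<close> by auto
    next
      case False
      hence "coprime k p" using p by (metis coprime_commute prime_imp_coprime)
      hence "k dvd m" using k by (simp add: coprime_dvd_mult_right_iff)
      thus ?thesis by simp
    qed
  qed auto
  show "{k. k dvd m} \<inter> (\<lambda>k. p * k) ` {k. k dvd m} = {}"
    using pm by (auto dest: dvd_mult_left)
qed

lemma cyc_pm:
  fixes p :: nat
  assumes p: "prime p"
  shows "m \<ge> 1 \<Longrightarrow> \<not> p dvd m \<Longrightarrow>
    cyclotomic (p * m) * cyclotomic m = pcompose (cyclotomic m) (monom 1 p)"
proof (induction m rule: less_induct)
  case (less m)
  define Dm where "Dm = {k::nat. k dvd m}"
  define D' where "D' = Dm - {m}"
  have fin: "finite Dm" using less.prems by (simp add: Dm_def)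
  have p0: "p > 0" using p by (simp add: prime_gt_0_nat)
  have pm1: "p * m \<ge> 1" using p0 less.prems by simp
  have inj: "inj_on (\<lambda>k. p * k) Dm" using p0 by (auto simp: inj_on_def)
  have "(\<Prod>k\<in>Dm. cyclotomic k * cyclotomic (p * k)) =
        (\<Prod>k\<in>Dm. cyclotomic k) * (\<Prod>k\<in>(\<lambda>k. p * k) ` Dm. cyclotomic k)"
    by (simp add: prod.distrib prod.reindex[OF inj])
  also have "\<dots> = (\<Prod>k\<in>{k. k dvd p * m}. cyclotomic k)"
    unfolding divisors_pm(1)[OF p less.prems(2)] Dm_def
    by (rule prod.union_disjoint[symmetric]) (use fin divisors_pm(2)[OF p less.prems(2)] in \<open>auto simp: Dm_def\<close>)
  also have "\<dots> = monom 1 (p * m) - 1" by (rule cyc_prod[OF pm1])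
  also have "\<dots> = pcompose (monom 1 m - 1) (monom 1 p)"
    by (simp add: pcompose_diff pcomp_monom monom_pow pcompose_1)
  also have "monom 1 m - 1 = (\<Prod>k\<in>Dm. cyclotomic k)" unfolding Dm_def
    by (rule cyc_prod[OF less.prems(1), symmetric])
  finally have E: "(\<Prod>k\<in>Dm. cyclotomic k * cyclotomic (p * k)) =
      (\<Prod>k\<in>Dm. pcompose (cyclotomic k) (monom 1 p))"
    by (simp add: pcompose_prod)
  have IH: "\<And>k. k \<in> D' \<Longrightarrow> cyclotomic k * cyclotomic (p * k) = pcompose (cyclotomic k) (monom 1 p)"
  proof -
    fix k assume k: "k \<in> D'"
    hence kd: "k dvd m" "k \<noteq> m" by (auto simp: D'_def Dm_def)
    hence "k < m" using less.prems by (metis dvd_imp_le le_neq_implies_less not_one_le_zero gr0I)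
    moreover have "k \<ge> 1" using kd less.prems by (cases k) auto
    moreover have "\<not> p dvd k" using kd less.prems by (meson dvd_trans)
    ultimately show "cyclotomic k * cyclotomic (p * k) = pcompose (cyclotomic k) (monom 1 p)"
      using less.IH by (simp add: mult.commute)
  qed
  have Dsplit: "Dm = insert m D'" "m \<notin> D'" by (auto simp: D'_def Dm_def)
  have finD': "finite D'" using fin by (simp add: D'_def)
  have nz: "(\<Prod>k\<in>D'. cyclotomic k * cyclotomic (p * k)) \<noteq> 0"
  proof -
    have "\<forall>k\<in>D'. k \<ge> 1" using less.prems by (auto simp: D'_def Dm_def intro: Suc_leI elim: dvdE)
    hence "\<forall>k\<in>D'. cyclotomic k * cyclotomic (p * k) \<noteq> 0" using p0
      by (auto simp: cyc_nz)
    thus ?thesis using finD' by (simp add: prod_zero_iff)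
  qed
  have "(cyclotomic m * cyclotomic (p * m)) * (\<Prod>k\<in>D'. cyclotomic k * cyclotomic (p * k)) =
        pcompose (cyclotomic m) (monom 1 p) * (\<Prod>k\<in>D'. cyclotomic k * cyclotomic (p * k))"
  proof -
    have "(\<Prod>k\<in>D'. cyclotomic k * cyclotomic (p * k)) = (\<Prod>k\<in>D'. pcompose (cyclotomic k) (monom 1 p))"
      using IH by (rule prod.cong[OF refl])
    thus ?thesis using E unfolding Dsplit(1) using finD' Dsplit(2) by simp
  qed
  hence "cyclotomic m * cyclotomic (p * m) = pcompose (cyclotomic m) (monom 1 p)"
    using nz by simp
  thus ?case by (simp add: mult.commute)
qed


lemma fermat_aux:
  fixes q x :: nat
  assumes q: "prime q"
  shows "int q dvd int x ^ q - int x"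
proof (induction x)
  case 0 thus ?case using q by (simp add: prime_gt_0_nat power_0_left)
next
  case (Suc x)
  define g where "g = (\<lambda>k. of_nat (q choose k) * int x ^ k * 1 ^ (q - k) :: int)"
  have q0: "q > 0" using q by (simp add: prime_gt_0_nat)
  have bin: "(int x + 1) ^ q = (\<Sum>k\<le>q. g k)" unfolding g_def by (rule binomial_ring)
  have s1: "(\<Sum>k\<le>q. g k) = g 0 + (\<Sum>k\<in>{..q} - {0}. g k)" by (rule sum.remove) auto
  have s2: "(\<Sum>k\<in>{..q} - {0}. g k) = g q + (\<Sum>k\<in>{..q} - {0} - {q}. g k)"
    by (rule sum.remove) (use q0 in auto)
  have dv: "int q dvd (\<Sum>k\<in>{..q} - {0} - {q}. g k)"
  proof (rule dvd_sum)
    fix k assume "k \<in> {..q} - {0} - {q}"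
    hence "k < q" "k \<noteq> 0" by auto
    hence "q dvd (q choose k)" using q q0 by (intro dvd_choose_prime) auto
    hence "int q dvd of_nat (q choose k)" by (simp add: int_dvd_int_iff)
    thus "int q dvd g k" unfolding g_def by simp
  qed
  have "int (Suc x) ^ q - int (Suc x) = (int x ^ q - int x) + (\<Sum>k\<in>{..q} - {0} - {q}. g k)"
    using bin s1 s2 q0 by (simp add: g_def ac_simps)
  hence "int (Suc x) ^ q - int (Suc x) = (int x ^ q - int x) + (\<Sum>k\<in>{..q} - {0} - {q}. g k)" .
  thus ?case using Suc.IH dv by (metis dvd_add)
qed

lemma fermat_int:
  fixes q x :: nat
  assumes q: "prime q" and nd: "\<not> q dvd x"
  shows "[int x ^ (q - 1) = 1] (mod int q)"
proof -
  have q0: "q > 0" using q by (simp add: prime_gt_0_nat)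
  have "int x ^ q - int x = int x * (int x ^ (q - 1) - 1)"
    using q0 by (simp add: algebra_simps power_eq_if)
  hence "int q dvd int x * (int x ^ (q - 1) - 1)" using fermat_aux[OF q, of x] by simp
  moreover have "prime (int q)" using q by simp
  moreover have "\<not> int q dvd int x" using nd by (simp add: int_dvd_int_iff)
  ultimately have "int q dvd int x ^ (q - 1) - 1" by (simp add: prime_dvd_mult_iff)
  thus ?thesis by (simp add: cong_iff_dvd_diff)
qed

lemma cong_gcd_exp:
  fixes x m :: int and a b :: nat
  assumes "[x ^ a = 1] (mod m)" "[x ^ b = 1] (mod m)" "a \<noteq> 0"
  shows "[x ^ gcd a b = 1] (mod m)"
proof -
  obtain u v where uv: "a * u = b * v + gcd a b" using bezout_nat[OF assms(3), of b] by blast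
  have "[x ^ (a * u) = 1] (mod m)"
    using cong_pow[OF assms(1), of u] by (simp add: power_mult)
  moreover have "[x ^ (b * v + gcd a b) = x ^ gcd a b] (mod m)"
  proof -
    have "[(x ^ b) ^ v * x ^ gcd a b = 1 ^ v * x ^ gcd a b] (mod m)"
      by (intro cong_mult cong_pow assms(2) cong_refl)
    thus ?thesis by (simp add: power_add power_mult)
  qed
  ultimately show ?thesis using uv by (metis cong_sym cong_trans)
qed

lemma prod_ge2:
  fixes f :: "'a \<Rightarrow> real"
  assumes "finite K" "K \<noteq> {}" "\<forall>k\<in>K. f k \<ge> 2"
  shows "prod f K \<ge> 2"
  using assms
proof (induction K rule: finite_ne_induct)
  case (singleton x) thus ?case by simp
next
  case (insert x F)
  have "prod f (insert x F) = f x * prod f F" using insert.hyps by simp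
  moreover have "f x \<ge> 2" "prod f F \<ge> 2" using insert by auto
  moreover have "2 * 2 \<le> f x * prod f F"
    by (rule mult_mono) (use \<open>f x \<ge> 2\<close> \<open>prod f F \<ge> 2\<close> in auto)
  ultimately show ?case by simp
qed

lemma cyc_big:
  fixes x :: int
  assumes N: "N \<ge> 1" and x: "x \<ge> 3"
  shows "\<bar>poly (cyclotomic N) x\<bar> \<ge> 2"
proof -
  define K where "K = {k\<in>{1..N}. coprime k N}"
  have "complex_of_int (poly (cyclotomic N) x) = poly (cyclotomic_complex N) (of_int x)"
    using ci_poly[of "cyclotomic N" x] cyc_ci[OF N] by simp
  also have "\<dots> = (\<Prod>k\<in>K. of_int x - cis (2 * pi * real k / real N))"
    unfolding cyclotomic_complex_def K_def by (simp add: poly_prod)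
  finally have e: "norm (complex_of_int (poly (cyclotomic N) x)) =
      (\<Prod>k\<in>K. norm (of_int x - cis (2 * pi * real k / real N)))"
    by (simp add: prod_norm)
  have "(\<Prod>k\<in>K. norm (of_int x - cis (2 * pi * real k / real N))) \<ge> 2"
  proof (rule prod_ge2)
    show "finite K" by (simp add: K_def)
    show "K \<noteq> {}" using N by (auto simp: K_def intro!: exI[of _ 1])
    show "\<forall>k\<in>K. 2 \<le> norm (of_int x - cis (2 * pi * real k / real N))"
    proof
      fix k
      have "norm (complex_of_int x) - norm (cis (2 * pi * real k / real N)) \<le>
            norm (of_int x - cis (2 * pi * real k / real N))" by (rule norm_triangle_ineq2)
      moreover have "norm (complex_of_int x) = real_of_int x" using x by simp
      ultimately show "2 \<le> norm (of_int x - cis (2 * pi * real k / real N))" using x by simp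
    qed
  qed
  moreover have "norm (complex_of_int (poly (cyclotomic N) x)) = \<bar>real_of_int (poly (cyclotomic N) x)\<bar>"
    by (simp only: norm_of_int)
  ultimately show ?thesis using e by linarith
qed

lemma poly_diff0_dvd: "(x::int) dvd poly f x - poly f 0"
  by (cases f) simp


lemma primes_1_mod': 
  assumes N: "N \<ge> 1"
  shows "\<exists>q::nat. prime q \<and> q > B \<and> N dvd q - 1"
proof -
  define X :: nat where "X = fact (B + N + 3)"
  define x where "x = int X"
  define v where "v = poly (cyclotomic N) x"
  have X3: "X \<ge> 3"
  proof -
    have "B + N + 3 \<le> X" unfolding X_def by (rule fact_ge_self)
    thus ?thesis by simp
  qed
  hence "\<bar>v\<bar> \<ge> 2" unfolding v_def x_def using cyc_big[OF N, of "int X"] by simp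
  hence "nat \<bar>v\<bar> \<noteq> 1" by simp
  then obtain q where q: "prime q" "q dvd nat \<bar>v\<bar>" using prime_factor_nat by blast
  have qv: "int q dvd v" using q(2)
  proof -
    have "int q dvd int (nat \<bar>v\<bar>)" using q(2) by (simp only: int_dvd_int_iff)
    thus ?thesis by simp
  qed
  have q0: "q > 0" using q(1) by (simp add: prime_gt_0_nat)
  have nqx: "\<not> q dvd X"
  proof
    assume "q dvd X"
    hence "int q dvd x" by (simp add: x_def int_dvd_int_iff)
    hence "int q dvd v - poly (cyclotomic N) 0" using poly_diff0_dvd[of x "cyclotomic N"]
      unfolding v_def by (rule dvd_trans)
    hence "int q dvd v - (v - poly (cyclotomic N) 0)" by (rule dvd_diff[OF qv])
    hence "int q dvd poly (cyclotomic N) 0" by simp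
    moreover have "poly (cyclotomic N) 0 = 1 \<or> poly (cyclotomic N) 0 = -1" using cyc0[OF N] by simp
    ultimately have "int q dvd 1" by (elim disjE) simp_all
    hence "int q dvd int 1" by simp
    hence "q dvd 1" by (simp only: int_dvd_int_iff)
    thus False using q(1) by simp
  qed
  have qbig: "q > B + N + 3"
  proof (rule ccontr)
    assume "\<not> q > B + N + 3"
    hence "q dvd X" unfolding X_def using q0 by (intro dvd_fact) auto
    thus False using nqx by simp
  qed
  have c1: "[x ^ N = 1] (mod int q)"
  proof -
    have "v dvd poly (monom 1 N - 1) x" unfolding v_def by (rule poly_dvd_eval[OF cyc_dvd[OF N]])
    hence "int q dvd x ^ N - 1" using qv by (simp add: poly_monom) (metis dvd_trans)
    thus ?thesis by (simp add: cong_iff_dvd_diff)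
  qed
  have c2: "[x ^ (q - 1) = 1] (mod int q)" unfolding x_def by (rule fermat_int[OF q(1) nqx])
  define e where "e = gcd N (q - 1)"
  have ce: "[x ^ e = 1] (mod int q)" unfolding e_def using cong_gcd_exp[OF c1 c2] N by simp
  have e0: "e \<ge> 1" using N by (simp add: e_def Suc_le_eq)
  have eN: "e dvd N" by (simp add: e_def)
  show ?thesis
  proof (cases "e = N")
    case True
    hence "N dvd q - 1" using e_def by (metis gcd_dvd2)
    thus ?thesis using q(1) qbig by (intro exI[of _ q]) auto
  next
    case False
    hence eN': "e < N" using eN N by (simp add: dvd_imp_le le_neq_implies_less)
    obtain t where t: "N = e * t" using eN by (auto elim: dvdE)
    have t1: "t \<ge> 1" using t N by (cases t) auto
    have tN: "t \<le> N" using t e0 by simp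
    define G where "G = (\<Sum>i<t. monom (1::int) (e * i))"
    have G: "(monom 1 e - 1) * G = monom 1 N - 1"
    proof -
      have "monom (1::int) e ^ t - 1 = (monom 1 e - 1) * sum ((^) (monom 1 e)) {..<t}"
        by (rule power_diff_1_eq)
      moreover have "sum ((^) (monom (1::int) e)) {..<t} = G" unfolding G_def
        by (rule sum.cong) (simp_all add: monom_pow)
      ultimately show ?thesis using t by (simp add: monom_pow)
    qed
    define H where "H = (\<Prod>k\<in>{k. k dvd N} - {k. k dvd e}. cyclotomic k)"
    have "monom 1 N - 1 = H * (\<Prod>k\<in>{k. k dvd e}. cyclotomic k)"
      unfolding H_def cyc_prod[OF N, symmetric]
      by (rule prod.subset_diff) (use eN N in \<open>auto intro: dvd_trans\<close>)
    also have "(\<Prod>k\<in>{k. k dvd e}. cyclotomic k) = monom 1 e - 1" by (rule cyc_prod[OF e0])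
    finally have "(monom 1 e - 1) * G = (monom 1 e - 1) * H" using G by (simp add: mult.commute)
    moreover have "monom (1::int) e - 1 \<noteq> 0" using xn1_deg[OF e0, where 'a=int] e0 by auto
    ultimately have GH: "G = H" by simp
    have "cyclotomic N dvd H" unfolding H_def
      by (rule dvd_prodI) (use N eN' e0 in \<open>auto dest!: dvd_imp_le\<close>)
    hence "v dvd poly G x" unfolding v_def GH by (rule poly_dvd_eval)
    hence qS: "int q dvd (\<Sum>i<t. x ^ (e * i))" using qv
      by (simp add: G_def poly_sum poly_monom) (metis dvd_trans)
    have "[(\<Sum>i<t. x ^ (e * i)) = (\<Sum>i<t. 1)] (mod int q)"
    proof (rule cong_sum)
      fix i
      have "[(x ^ e) ^ i = 1 ^ i] (mod int q)" by (rule cong_pow[OF ce])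
      thus "[x ^ (e * i) = 1] (mod int q)" by (simp add: power_mult)
    qed
    hence "[0 = int t] (mod int q)" using qS by (simp add: cong_0_iff) (metis cong_0_iff cong_sym cong_trans)
    hence "int q dvd int t" by (metis cong_0_iff cong_sym)
    hence "q dvd t" by (simp add: int_dvd_int_iff)
    hence "q \<le> t" using t1 by (simp add: dvd_imp_le)
    thus ?thesis using tN qbig by simp
  qed
qed


lemma primes_1_mod: "N \<ge> 1 \<Longrightarrow> \<exists>q::nat. prime q \<and> q > B \<and> N dvd q - 1"
  by (rule primes_1_mod')

lemma monom_dvd_mono: "d \<le> p \<Longrightarrow> monom (1::'a::comm_ring_1) d dvd monom 1 p"
proof -
  assume "d \<le> p"
  hence "monom (1::'a) p = monom 1 d * monom 1 (p - d)" by (simp add: mult_monom)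
  thus ?thesis by simp
qed

lemma pcomp_cong:
  assumes "d \<le> p"
  shows "monom 1 d dvd pcompose f (monom (1::'a::comm_ring_1) p) - [:poly f 0:]"
proof (cases f)
  case (pCons a g)
  have "pcompose f (monom (1::'a) p) - [:poly f 0:] = monom 1 p * pcompose g (monom 1 p)"
    using pCons by (simp add: pcompose_pCons)
  thus ?thesis using monom_dvd_mono[OF assms, where 'a='a] by (metis dvd_mult2)
qed

lemma key1:
  assumes p: "prime p" "d \<le> p" and m: "m \<ge> 1" "\<not> p dvd m"
  shows "monom 1 d dvd cyclotomic (p * m) * cyclotomic m - [:poly (cyclotomic m) 0:]"
  using pcomp_cong[OF p(2), of "cyclotomic m"] cyc_pm[OF p(1) m] by simp

lemma elemA:
  assumes m: "m \<ge> 1"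
  shows "\<exists>n>B. special_form n \<and> (\<exists>c\<in>{1,-1}. monom 1 d dvd cyclotomic n * cyclotomic m - [:c:])"
proof -
  obtain p where p: "prime p" "p > B + d + m" "m dvd p - 1" using primes_1_mod[OF m] by blast
  have "\<not> p dvd m" using p(2) m by (auto dest: dvd_imp_le)
  hence "monom 1 d dvd cyclotomic (p * m) * cyclotomic m - [:poly (cyclotomic m) 0:]"
    using key1[OF p(1) _ m] p(2) by simp
  moreover have "special_form (p * m)" unfolding special_form_def using p m by auto
  moreover have "p * m > B" using p(2) m
    by (metis add_lessD1 less_le_trans mult_le_mono2 mult.right_neutral)
  ultimately show ?thesis using cyc0[OF m] by blast
qed

lemma elemB:
  assumes m: "m \<ge> 1"
  shows "\<exists>n>B. special_form n \<and> (\<exists>c\<in>{1,-1}. monom 1 d dvd cyclotomic n - [:c:] * cyclotomic m)"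
proof -
  obtain q::nat where q: "prime q" "q > d + m" using bigger_prime by blast
  have qm: "\<not> q dvd m" using q(2) m by (auto dest: dvd_imp_le)
  have q0: "q \<ge> 1" using q(1) prime_gt_0_nat by (simp add: Suc_leI)
  have qm1: "q * m \<ge> 1" using q0 m by simp
  obtain n c1 where n: "n > B" "special_form n" "c1 \<in> {1,-1}"
      "monom 1 d dvd cyclotomic n * cyclotomic (q * m) - [:c1:]"
    using elemA[OF qm1, of B d] by blast
  define c2 where "c2 = poly (cyclotomic m) 0"
  have c2: "c2 \<in> {1,-1}" using cyc0[OF m] by (simp add: c2_def)
  have k: "monom 1 d dvd cyclotomic (q * m) * cyclotomic m - [:c2:]"
    unfolding c2_def using key1[OF q(1) _ m(1) qm] q(2) by simp
  have sq: "[:c2:] * [:c2:] = (1 :: int poly)" using c2 by (auto simp: one_pCons)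
  have eq0: "\<And>Z X Y C1 C2 :: int poly. Z - C1 * C2 * Y =
    Z * (1 - C2 * C2) + Z * (- C2) * (X * Y - C2) + C2 * Y * (Z * X - C1)"
    by (simp add: algebra_simps)
  have eq: "cyclotomic n - [:c1:] * [:c2:] * cyclotomic m =
    cyclotomic n * (- [:c2:]) * (cyclotomic (q * m) * cyclotomic m - [:c2:]) +
    [:c2:] * cyclotomic m * (cyclotomic n * cyclotomic (q * m) - [:c1:])"
    using eq0[of "cyclotomic n" "[:c1:]" "[:c2:]" "cyclotomic m" "cyclotomic (q * m)"] sq by simp
  have "monom 1 d dvd cyclotomic n - [:c1:] * [:c2:] * cyclotomic m"
    unfolding eq by (intro dvd_add dvd_mult) (use k n(4) in auto)
  hence "monom 1 d dvd cyclotomic n - [:c1 * c2:] * cyclotomic m"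
    by (metis mult_pCons_left smult_pCons mult_zero_left pCons_0_0 add_0_right smult_0_right)
  moreover have "c1 * c2 \<in> {1,-1}" using n(3) c2 by auto
  ultimately show ?thesis using n by blast
qed


definition Lp :: "(nat \<times> bool) list \<Rightarrow> int poly" where
  "Lp xs = prod_list (map (\<lambda>(m,b). if b then cyclotomic m else 1) xs)"
definition Rp :: "(nat \<times> bool) list \<Rightarrow> int poly" where
  "Rp xs = prod_list (map (\<lambda>(m,b). if b then 1 else cyclotomic m) xs)"

lemma Lp_simps: "Lp [] = 1" "Lp ((m,b) # xs) = (if b then cyclotomic m else 1) * Lp xs"
  "Lp (xs @ ys) = Lp xs * Lp ys"
  by (simp_all add: Lp_def)
lemma Rp_simps: "Rp [] = 1" "Rp ((m,b) # xs) = (if b then 1 else cyclotomic m) * Rp xs"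
  "Rp (xs @ ys) = Rp xs * Rp ys"
  by (simp_all add: Rp_def)

lemma prod_list_ones: "prod_list (map (\<lambda>x. 1::'a::monoid_mult) xs) = 1"
  by (induction xs) auto

lemma Rp0: "\<forall>x\<in>set xs. fst x \<ge> 1 \<Longrightarrow> poly (Rp xs) 0 \<in> {1,-1}"
proof (induction xs)
  case Nil thus ?case by (simp add: Rp_simps)
next
  case (Cons x xs)
  obtain m b where x: "x = (m,b)" by (cases x)
  have "poly (if b then 1 else cyclotomic m) 0 \<in> {1,-1::int}"
    using cyc0[of m] Cons.prems x by auto
  moreover have "poly (Rp xs) 0 \<in> {1,-1}" using Cons by auto
  ultimately show ?case unfolding x Rp_simps by auto
qed

lemma Lp0: "\<forall>x\<in>set xs. fst x \<ge> 1 \<Longrightarrow> poly (Lp xs) 0 \<in> {1,-1}"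
proof (induction xs)
  case Nil thus ?case by (simp add: Lp_simps)
next
  case (Cons x xs)
  obtain m b where x: "x = (m,b)" by (cases x)
  have "poly (if b then cyclotomic m else 1) 0 \<in> {1,-1::int}"
    using cyc0[of m] Cons.prems x by auto
  moreover have "poly (Lp xs) 0 \<in> {1,-1}" using Cons by auto
  ultimately show ?case unfolding x Lp_simps by auto
qed

lemma realize:
  "\<forall>x\<in>set xs. fst x \<ge> 1 \<Longrightarrow> \<exists>S c. finite S \<and> (\<forall>n\<in>S. special_form n \<and> n > B) \<and> c \<in> {1,-1} \<and>
     monom 1 d dvd (\<Prod>n\<in>S. cyclotomic n) * Lp xs - [:c:] * Rp xs"
proof (induction xs arbitrary: B)
  case Nil
  show ?case by (intro exI[of _ "{}"] exI[of _ 1]) (simp add: Lp_simps Rp_simps one_pCons[symmetric])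
next
  case (Cons x xs)
  obtain m b where x: "x = (m,b)" by (cases x)
  have m: "m \<ge> 1" using Cons.prems x by auto
  have xs: "\<forall>x\<in>set xs. fst x \<ge> 1" using Cons.prems by auto
  show ?case
  proof (cases b)
    case True
    obtain n0 c0 where n0: "n0 > B" "special_form n0" "c0 \<in> {1,-1}"
      "monom 1 d dvd cyclotomic n0 * cyclotomic m - [:c0:]" using elemA[OF m, of B d] by blast
    obtain S c where S: "finite S" "\<forall>n\<in>S. special_form n \<and> n > n0" "c \<in> {1,-1}"
      "monom 1 d dvd (\<Prod>n\<in>S. cyclotomic n) * Lp xs - [:c:] * Rp xs"
      using Cons.IH[OF xs, of n0] by blast
    have nS: "n0 \<notin> S" using S(2) by auto
    define P where "P = (\<Prod>n\<in>S. cyclotomic n)"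
    have eq0: "\<And>Z P M L C0 C R :: int poly. Z * P * (M * L) - (C0 * C) * R =
      Z * M * (P * L - C * R) + C * R * (Z * M - C0)"
      by (simp add: algebra_simps)
    have "monom 1 d dvd cyclotomic n0 * P * (cyclotomic m * Lp xs) - ([:c0:] * [:c:]) * Rp xs"
      unfolding eq0 by (intro dvd_add dvd_mult) (use S(4) n0(4) in \<open>auto simp: P_def\<close>)
    moreover have "[:c0:] * [:c:] = [:c0 * c:]" by simp
    moreover have "(\<Prod>n\<in>insert n0 S. cyclotomic n) = cyclotomic n0 * P"
      using S(1) nS by (simp add: P_def)
    ultimately have "monom 1 d dvd (\<Prod>n\<in>insert n0 S. cyclotomic n) * Lp (x # xs) - [:c0 * c:] * Rp (x # xs)"
      using True x by (simp add: Lp_simps Rp_simps ac_simps)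
    moreover have "c0 * c \<in> {1,-1}" using S(3) n0(3) by auto
    moreover have "\<forall>n\<in>insert n0 S. special_form n \<and> n > B" using S(2) n0 by auto
    ultimately show ?thesis using S(1) by blast
  next
    case False
    obtain n0 c0 where n0: "n0 > B" "special_form n0" "c0 \<in> {1,-1}"
      "monom 1 d dvd cyclotomic n0 - [:c0:] * cyclotomic m" using elemB[OF m, of B d] by blast
    obtain S c where S: "finite S" "\<forall>n\<in>S. special_form n \<and> n > n0" "c \<in> {1,-1}"
      "monom 1 d dvd (\<Prod>n\<in>S. cyclotomic n) * Lp xs - [:c:] * Rp xs"
      using Cons.IH[OF xs, of n0] by blast
    have nS: "n0 \<notin> S" using S(2) by auto
    define P where "P = (\<Prod>n\<in>S. cyclotomic n)"
    have eq0: "\<And>Z P M L C0 C R :: int poly. Z * P * L - (C0 * C) * (M * R) =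
      Z * (P * L - C * R) + C * R * (Z - C0 * M)"
      by (simp add: algebra_simps)
    have "monom 1 d dvd cyclotomic n0 * P * Lp xs - ([:c0:] * [:c:]) * (cyclotomic m * Rp xs)"
      unfolding eq0 by (intro dvd_add dvd_mult) (use S(4) n0(4) in \<open>auto simp: P_def\<close>)
    moreover have "[:c0:] * [:c:] = [:c0 * c:]" by simp
    moreover have "(\<Prod>n\<in>insert n0 S. cyclotomic n) = cyclotomic n0 * P"
      using S(1) nS by (simp add: P_def)
    ultimately have "monom 1 d dvd (\<Prod>n\<in>insert n0 S. cyclotomic n) * Lp (x # xs) - [:c0 * c:] * Rp (x # xs)"
      using False x by (simp add: Lp_simps Rp_simps ac_simps)
    moreover have "c0 * c \<in> {1,-1}" using S(3) n0(3) by auto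
    moreover have "\<forall>n\<in>insert n0 S. special_form n \<and> n > B" using S(2) n0 by auto
    ultimately show ?thesis using S(1) by blast
  qed
qed

definition Dl :: "nat \<Rightarrow> bool \<Rightarrow> (nat \<times> bool) list" where
  "Dl j b = map (\<lambda>k. (k, b)) (sorted_list_of_set {k. k dvd j})"

lemma Dl_props:
  assumes j: "j \<ge> 1"
  shows "Lp (Dl j True) = monom 1 j - 1" "Rp (Dl j True) = 1"
    "Lp (Dl j False) = 1" "Rp (Dl j False) = monom 1 j - 1"
    "\<forall>x\<in>set (Dl j b). fst x \<ge> 1"
proof -
  have fin: "finite {k. k dvd j}" using j by simp
  have P: "prod_list (map cyclotomic (sorted_list_of_set {k. k dvd j})) = monom 1 j - 1"
    using prod.distinct_set_conv_list[of "sorted_list_of_set {k. k dvd j}" cyclotomic] fin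
      cyc_prod[OF j] by simp
  show "Lp (Dl j True) = monom 1 j - 1" using P by (simp add: Lp_def Dl_def o_def)
  show "Rp (Dl j True) = 1" by (simp add: Rp_def Dl_def o_def prod_list_ones)
  show "Lp (Dl j False) = 1" by (simp add: Lp_def Dl_def o_def prod_list_ones)
  show "Rp (Dl j False) = monom 1 j - 1" using P by (simp add: Rp_def Dl_def o_def)
  show "\<forall>x\<in>set (Dl j b). fst x \<ge> 1" using fin j
    by (auto simp: Dl_def intro: Suc_leI elim: dvdE)
qed

lemma adjust:
  fixes F :: "int poly"
  assumes j: "j \<ge> 1"
  shows "nat \<bar>r\<bar> = k \<Longrightarrow> \<forall>x\<in>set xs. fst x \<ge> 1 \<Longrightarrow> c \<in> {1,-1} \<Longrightarrow>
    monom 1 (Suc j) dvd F * Lp xs - [:c:] * Rp xs - [:r:] * monom 1 j * ([:c:] * Rp xs) \<Longrightarrow>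
    \<exists>xs' c'. (\<forall>x\<in>set xs'. fst x \<ge> 1) \<and> c' \<in> {1,-1} \<and> monom 1 (Suc j) dvd F * Lp xs' - [:c':] * Rp xs'"
proof (induction k arbitrary: r xs c)
  case 0
  hence "r = 0" by simp
  thus ?case using 0 by auto
next
  case (Suc k)
  have TT: "monom 1 (Suc j) dvd monom (1::int) j * monom 1 j"
    using j by (simp add: mult_monom monom_dvd_mono)
  define X where "X = F * Lp xs"
  define Y where "Y = [:c:] * Rp xs"
  define T where "T = monom (1::int) j"
  have H: "monom 1 (Suc j) dvd X - Y - [:r:] * T * Y" using Suc.prems(4) by (simp add: X_def Y_def T_def)
  have TT': "monom 1 (Suc j) dvd T * T" using TT by (simp add: T_def)
  show ?case
  proof (cases "r > 0")
    case True
    define xs' where "xs' = xs @ Dl j True"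
    have L: "F * Lp xs' = X * (T - 1)" "Rp xs' = Rp xs"
      using Dl_props[OF j] by (simp_all add: xs'_def Lp_simps Rp_simps X_def T_def mult.assoc)
    have eq0: "\<And>X Y T R :: int poly. X * (T - 1) - (- Y) - (R - 1) * T * (- Y) =
        (X - Y - R * T * Y) * (T - 1) + R * (T * T) * Y"
      by (simp add: algebra_simps)
    have "monom 1 (Suc j) dvd X * (T - 1) - (- Y) - ([:r:] - 1) * T * (- Y)"
      unfolding eq0 by (intro dvd_add dvd_mult dvd_mult2 H TT')
    moreover have "[:r:] - 1 = [:r - 1:]" by (simp add: one_pCons)
    moreover have "- Y = [:-c:] * Rp xs'" using L by (simp add: Y_def)
    ultimately have "monom 1 (Suc j) dvd F * Lp xs' - [:-c:] * Rp xs' - [:r - 1:] * monom 1 j * ([:-c:] * Rp xs')"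
      using L by (simp add: T_def ac_simps)
    moreover have "nat \<bar>r - 1\<bar> = k" using Suc.prems(1) True by simp
    moreover have "\<forall>x\<in>set xs'. fst x \<ge> 1" using Suc.prems(2) Dl_props(5)[OF j] by (auto simp: xs'_def)
    moreover have "-c \<in> {1,-1}" using Suc.prems(3) by auto
    ultimately show ?thesis using Suc.IH by blast
  next
    case False
    hence neg: "r < 0" using Suc.prems(1) by auto
    define xs' where "xs' = xs @ Dl j False"
    have L: "Lp xs' = Lp xs" "Rp xs' = Rp xs * (T - 1)"
      using Dl_props[OF j] by (simp_all add: xs'_def Lp_simps Rp_simps T_def)
    have eq0: "\<And>X Y T R :: int poly. X - (- (Y * (T - 1))) - (R + 1) * T * (- (Y * (T - 1))) =
        (X - Y - R * T * Y) + (R + 1) * (T * T) * Y"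
      by (simp add: algebra_simps)
    have A: "monom 1 (Suc j) dvd X - (- (Y * (T - 1))) - ([:r:] + 1) * T * (- (Y * (T - 1)))"
      unfolding eq0 by (intro dvd_add dvd_mult dvd_mult2 H TT')
    have E0: "[:r:] + 1 = [:r + 1:]" by (simp add: one_pCons)
    have E1: "X = F * Lp xs'" by (simp add: X_def L)
    have E2: "- (Y * (T - 1)) = [:-c:] * Rp xs'" using L by (simp add: Y_def)
    have "monom 1 (Suc j) dvd F * Lp xs' - [:-c:] * Rp xs' - [:r + 1:] * monom 1 j * ([:-c:] * Rp xs')"
      using A unfolding E0 E1 E2 unfolding T_def .
    moreover have "nat \<bar>r + 1\<bar> = k" using Suc.prems(1) neg by simp
    moreover have "\<forall>x\<in>set xs'. fst x \<ge> 1" using Suc.prems(2) Dl_props(5)[OF j] by (auto simp: xs'_def)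
    moreover have "-c \<in> {1,-1}" using Suc.prems(3) by auto
    ultimately show ?thesis using Suc.IH by blast
  qed
qed


lemma X_dvd: "monom 1 (Suc 0) dvd (p :: 'a::idom poly) \<longleftrightarrow> poly p 0 = 0"
proof -
  have "monom (1::'a) (Suc 0) = [:- 0, 1:]" by (simp add: monom_Suc monom_0 one_pCons)
  thus ?thesis using poly_eq_0_iff_dvd[of p 0] by simp
qed

lemma rep:
  fixes F :: "int poly"
  assumes F: "poly F 0 \<in> {1,-1}"
  shows "\<exists>xs c. (\<forall>x\<in>set xs. fst x \<ge> 1) \<and> c \<in> {1,-1} \<and> monom 1 j dvd F * Lp xs - [:c:] * Rp xs"
proof (induction j)
  case 0
  show ?case by (intro exI[of _ "[]"] exI[of _ 1]) (simp add: monom_0 one_pCons[symmetric])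
next
  case (Suc j)
  show ?case
  proof (cases "j = 0")
    case True
    have "monom 1 (Suc 0) dvd F * Lp [] - [:poly F 0:] * Rp []"
      by (simp add: X_dvd Lp_simps Rp_simps)
    thus ?thesis using True F by (intro exI[of _ "[]"] exI[of _ "poly F 0"]) auto
  next
    case False
    hence j: "j \<ge> 1" by simp
    obtain xs c where xs: "\<forall>x\<in>set xs. fst x \<ge> 1" "c \<in> {1,-1}"
      "monom 1 j dvd F * Lp xs - [:c:] * Rp xs" using Suc.IH by blast
    define X where "X = F * Lp xs"
    define Y where "Y = [:c:] * Rp xs"
    obtain Q where Q: "X - Y = monom 1 j * Q" using xs(3) by (auto simp: X_def Y_def elim: dvdE)
    have Y0: "poly Y 0 * poly Y 0 = 1" using Rp0[OF xs(1)] xs(2) by (auto simp: Y_def)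
    define r where "r = poly Q 0 * poly Y 0"
    have "poly (Q - [:r:] * Y) 0 = 0" unfolding r_def using Y0
      by (simp add: algebra_simps)
    hence "monom 1 (Suc 0) dvd Q - [:r:] * Y" by (simp only: X_dvd)
    then obtain Q' where Q': "Q - [:r:] * Y = monom 1 (Suc 0) * Q'" by (rule dvdE)
    have "X - Y - [:r:] * monom 1 j * Y = monom 1 j * (Q - [:r:] * Y)"
      using Q by (simp add: algebra_simps)
    also have "\<dots> = monom 1 (Suc j) * Q'"
    proof -
      have mm: "monom (1::int) j * monom 1 (Suc 0) = monom 1 (Suc j)" by (simp add: mult_monom)
      show ?thesis unfolding Q' mm[symmetric] by (rule mult.assoc[symmetric])
    qed
    finally have "monom 1 (Suc j) dvd F * Lp xs - [:c:] * Rp xs - [:r:] * monom 1 j * ([:c:] * Rp xs)"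
      by (simp add: X_def Y_def)
    thus ?thesis using adjust[OF j refl xs(1) xs(2)] by blast
  qed
qed


lemma cancel_monom:
  fixes L Z :: "int poly"
  assumes "poly L 0 \<noteq> 0" "monom 1 d dvd L * Z"
  shows "monom 1 d dvd Z"
proof (cases "Z = 0")
  case True thus ?thesis by simp
next
  case False
  have L0: "L \<noteq> 0" using assms(1) by auto
  hence LZ: "L * Z \<noteq> 0" using False by simp
  have "d \<le> order 0 (L * Z)" using assms(2) monom_1_dvd_iff[OF LZ] by simp
  also have "order 0 (L * Z) = order 0 L + order 0 Z" by (rule order_mult[OF LZ])
  also have "order 0 L = 0" using assms(1) by (simp add: order_root)
  finally show ?thesis using monom_1_dvd_iff[OF False] by simp
qed


theorem proposition7p3:
  fixes F :: "int poly" and d :: nat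
  assumes "poly F 0 \<in> {-1, 1}" and "d > 0"
  shows "\<exists>M\<in>special_root_of_unity_polys. monom 1 d dvd (F - M)"
proof -
  have F: "poly F 0 \<in> {1,-1}" using assms(1) by auto
  obtain xs c where xs: "\<forall>x\<in>set xs. fst x \<ge> 1" "c \<in> {1,-1}"
    "monom 1 d dvd F * Lp xs - [:c:] * Rp xs" using rep[OF F] by blast
  obtain S c2 where S: "finite S" "\<forall>n\<in>S. special_form n \<and> n > 0" "c2 \<in> {1,-1}"
    "monom 1 d dvd (\<Prod>n\<in>S. cyclotomic n) * Lp xs - [:c2:] * Rp xs"
    using realize[OF xs(1), of 0 d] by blast
  define P where "P = (\<Prod>n\<in>S. cyclotomic n)"
  have sq: "[:c2:] * [:c2:] = (1::int poly)" using S(3) by (auto simp: one_pCons)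
  have eq0: "\<And>L F P C C2 R :: int poly. L * (F - C * C2 * P) =
     (F * L - C * R) - C * C2 * (P * L - C2 * R) + C * R * (1 - C2 * C2)"
    by (simp add: algebra_simps)
  have E: "Lp xs * (F - [:c:] * [:c2:] * P) =
      (F * Lp xs - [:c:] * Rp xs) - [:c:] * [:c2:] * (P * Lp xs - [:c2:] * Rp xs)"
    using eq0[of "Lp xs" F "[:c:]" "[:c2:]" P "Rp xs"] unfolding sq by (simp only: diff_self mult_zero_right add_0_right)
  have "monom 1 d dvd [:c:] * [:c2:] * (P * Lp xs - [:c2:] * Rp xs)"
    by (rule dvd_mult) (use S(4) in \<open>simp add: P_def\<close>)
  hence dv: "monom 1 d dvd Lp xs * (F - [:c:] * [:c2:] * P)"
    unfolding E by (rule dvd_diff[OF xs(3)])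
  have nz: "poly (Lp xs) 0 \<noteq> 0" using Lp0[OF xs(1)] by auto
  have dd: "monom 1 d dvd F - [:c:] * [:c2:] * P" by (rule cancel_monom[OF nz dv])
  have cc: "[:c:] * [:c2:] = [:c * c2:]" by simp
  have D: "monom 1 d dvd F - [:c * c2:] * P" using dd unfolding cc .
  have s: "[:c * c2:] \<in> {1, -1 :: int poly}" using xs(2) S(3) by (auto simp: one_pCons)
  have "\<exists>s' S'. [:c * c2:] * P = s' * (\<Prod>n\<in>S'. cyclotomic n) \<and> s' \<in> {1,-1} \<and> finite S' \<and>
      (\<forall>n\<in>S'. special_form n)"
    using s S(1) S(2) unfolding P_def by (intro exI[of _ "[:c * c2:]"] exI[of _ S]) auto
  hence "[:c * c2:] * P \<in> special_root_of_unity_polys"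
    unfolding special_root_of_unity_polys_def by simp
  thus ?thesis using D by blast
qed


end
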